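(* Let $a,a^{\dagger},b,b^{\dagger}$ be linear operators (with $a^{\dagger},b^{\dagger}$ the adjoints of $a,b$) satisfying $\ker a^{\dagger}=\{0\}=\ker b$ and $$[a^{\dagger}a,a^{\dagger}b]=\lambda a^{\dagger}b,\quad [bb^{\dagger},ba^{\dagger}]=\lambda' ba^{\dagger},\quad [a^{\dagger}b,b^{\dagger}a]=\mu a^{\dagger}a+\nu,\quad [ba^{\dagger},ab^{\dagger}]=\mu' aa^{\dagger}+\nu',$$ where $\lambda,\lambda',\nu,\nu'\in\mathbb R$, $\lambda\neq 0$, and $\mu,\mu'$ are constants. Then there exist $\alpha,\beta,\gamma,\delta\in\mathbb R$ such that $b^{\dagger}b=\alpha a^{\dagger}a+\gamma$ and $bb^{\dagger}=\beta aa^{\dagger}+\delta$.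
   Context: $[X,Y]=XY-YX$ denotes the commutator; all identities are understood as operator identities on a suitable common domain. *)

theory Defs
  imports Complex_Main
begin

class cvec = ab_group_add +
  fixes scaleC :: "complex \<Rightarrow> 'a \<Rightarrow> 'a" (infixr "*\<^sub>C" 75)
  assumes scaleC_add_right: "c *\<^sub>C (x + y) = c *\<^sub>C x + c *\<^sub>C y"
    and scaleC_add_left: "(c + d) *\<^sub>C x = c *\<^sub>C x + d *\<^sub>C x"
    and scaleC_scaleC: "c *\<^sub>C (d *\<^sub>C x) = (c * d) *\<^sub>C x"
    and scaleC_one: "1 *\<^sub>C x = x"

definition clin :: "('a::cvec \<Rightarrow> 'a) \<Rightarrow> bool" where
  "clin f \<longleftrightarrow> (\<forall>x y. f (x + y) = f x + f y) \<and> (\<forall>c x. f (c *\<^sub>C x) = c *\<^sub>C f x)"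

definition is_cinner :: "('a::cvec \<Rightarrow> 'a \<Rightarrow> complex) \<Rightarrow> bool" where
  "is_cinner ip \<longleftrightarrow>
     (\<forall>x y. ip x y = cnj (ip y x)) \<and>
     (\<forall>x y z. ip x (y + z) = ip x y + ip x z) \<and>
     (\<forall>c x y. ip x (c *\<^sub>C y) = c * ip x y) \<and>
     (\<forall>x. Im (ip x x) = 0 \<and> Re (ip x x) \<ge> 0) \<and>
     (\<forall>x. ip x x = 0 \<longrightarrow> x = 0)"

definition is_adjoint :: "('a::cvec \<Rightarrow> 'a \<Rightarrow> complex) \<Rightarrow> ('a \<Rightarrow> 'a) \<Rightarrow> ('a \<Rightarrow> 'a) \<Rightarrow> bool" where
  "is_adjoint ip a ad \<longleftrightarrow> (\<forall>x y. ip (a x) y = ip x (ad y))"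

definition opcomm :: "('a::cvec \<Rightarrow> 'a) \<Rightarrow> ('a \<Rightarrow> 'a) \<Rightarrow> ('a \<Rightarrow> 'a)" where
  "opcomm X Y = (\<lambda>x. X (Y x) - Y (X x))"

end

theory Submission
  imports Defs
begin

lemma scaleC_zero_left [simp]: "(0::complex) *\<^sub>C (x::'a::cvec) = 0"
proof -
  have "(0::complex) *\<^sub>C x = (0 + 0) *\<^sub>C x" by simp
  also have "\<dots> = 0 *\<^sub>C x + 0 *\<^sub>C x" by (rule scaleC_add_left)
  finally show ?thesis by simp
qed

lemma scaleC_zero_right [simp]: "c *\<^sub>C (0::'a::cvec) = 0"
proof -
  have "c *\<^sub>C (0::'a) = c *\<^sub>C (0 + 0)" by simp
  also have "\<dots> = c *\<^sub>C 0 + c *\<^sub>C 0" by (rule scaleC_add_right)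
  finally show ?thesis by simp
qed

lemma scaleC_minus_right: "c *\<^sub>C (- x) = - (c *\<^sub>C (x::'a::cvec))"
proof -
  have "c *\<^sub>C (- x) + c *\<^sub>C x = 0" by (simp flip: scaleC_add_right)
  then show ?thesis by (simp add: eq_neg_iff_add_eq_0)
qed

lemma scaleC_diff_right: "c *\<^sub>C (x - y) = c *\<^sub>C x - c *\<^sub>C (y::'a::cvec)"
  using scaleC_add_right[of c x "- y"] by (simp add: scaleC_minus_right)

lemma scaleC_minus_left: "(- c) *\<^sub>C x = - (c *\<^sub>C (x::'a::cvec))"
proof -
  have "(- c) *\<^sub>C x + c *\<^sub>C x = 0" by (simp flip: scaleC_add_left)
  then show ?thesis by (simp add: eq_neg_iff_add_eq_0)
qed

lemma scaleC_diff_left: "(c - d) *\<^sub>C x = c *\<^sub>C x - d *\<^sub>C (x::'a::cvec)"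
  using scaleC_add_left[of c "- d" x] by (simp add: scaleC_minus_left)

lemma clin_add: "clin f \<Longrightarrow> f (x + y) = f x + f y" by (simp add: clin_def)
lemma clin_scale: "clin f \<Longrightarrow> f (c *\<^sub>C x) = c *\<^sub>C f x" by (simp add: clin_def)
lemma clin_diff: assumes "clin f" shows "f (x - y) = f x - f y"
proof -
  have "f (x - y) + f y = f x" using clin_add[OF assms, of "x - y" y] by simp
  then show ?thesis by (simp add: eq_diff_eq)
qed

lemma same_diff: "(A::'a::ab_group_add) - C = r \<Longrightarrow> B - C = r \<Longrightarrow> A = B"
  by (metis diff_add_cancel)

lemma solve_lin:
  fixes y u x :: "'a::cvec" and lam :: real and c m :: complex
  assumes "lam \<noteq> 0"
    and h: "complex_of_real lam *\<^sub>C y = - (c *\<^sub>C u) - m *\<^sub>C u - complex_of_real n *\<^sub>C x"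
  shows "y = (- (c + m) / complex_of_real lam) *\<^sub>C u + (- complex_of_real n / complex_of_real lam) *\<^sub>C x"
proof -
  have "y = (1 / complex_of_real lam) *\<^sub>C (complex_of_real lam *\<^sub>C y)"
    using assms(1) by (simp add: scaleC_scaleC scaleC_one)
  also have "\<dots> = - ((c / complex_of_real lam) *\<^sub>C u) - (m / complex_of_real lam) *\<^sub>C u
      - (complex_of_real n / complex_of_real lam) *\<^sub>C x"
    unfolding h by (simp add: scaleC_diff_right scaleC_minus_right scaleC_scaleC)
  also have "\<dots> = (- (c + m) / complex_of_real lam) *\<^sub>C u + (- complex_of_real n / complex_of_real lam) *\<^sub>C x"
  proof -
    have k1: "- (c + m) / complex_of_real lam = - (c / complex_of_real lam) - m / complex_of_real lam"
      by (simp add: diff_divide_distrib)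
    have k2: "- complex_of_real n / complex_of_real lam = - (complex_of_real n / complex_of_real lam)" by simp
    show ?thesis unfolding k1 k2 scaleC_diff_left scaleC_minus_left by simp
  qed
  finally show ?thesis .
qed

locale ipctx =
  fixes ip :: "'v::cvec \<Rightarrow> 'v \<Rightarrow> complex"
  assumes ip: "is_cinner ip"
begin

lemma sym: "ip x y = cnj (ip y x)" using ip unfolding is_cinner_def by blast
lemma addR: "ip x (y + z) = ip x y + ip x z" using ip unfolding is_cinner_def by blast
lemma scaleR': "ip x (c *\<^sub>C y) = c * ip x y" using ip unfolding is_cinner_def by blast
lemma diffR: "ip x (y - z) = ip x y - ip x z"
proof -
  have "ip x (y - z) + ip x z = ip x y" using addR[of x "y - z" z] by simp
  then show ?thesis by (simp add: eq_diff_eq)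
qed
lemma diffL: "ip (y - z) x = ip y x - ip z x"
proof -
  have "ip (y - z) x = cnj (ip x (y - z))" by (rule sym)
  also have "\<dots> = cnj (ip x y) - cnj (ip x z)" by (simp add: diffR)
  also have "\<dots> = ip y x - ip z x" by (simp add: sym[of y x] sym[of z x])
  finally show ?thesis .
qed
lemma scaleL: "ip (c *\<^sub>C y) x = cnj c * ip y x"
proof -
  have "ip (c *\<^sub>C y) x = cnj (ip x (c *\<^sub>C y))" by (rule sym)
  also have "\<dots> = cnj c * cnj (ip x y)" by (simp add: scaleR')
  also have "\<dots> = cnj c * ip y x" by (simp add: sym[of y x])
  finally show ?thesis .
qed
lemma ext: assumes "\<And>z. ip z u = ip z v" shows "u = v"
proof -
  have "ip (u - v) (u - v) = 0" by (simp add: diffR assms)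
  then have "u - v = 0" using ip unfolding is_cinner_def by blast
  then show ?thesis by simp
qed
lemma adjL: assumes "is_adjoint ip a ad" shows "ip (ad x) y = ip x (a y)"
proof -
  have "ip (ad x) y = cnj (ip y (ad x))" by (rule sym)
  also have "\<dots> = cnj (ip (a y) x)" using assms by (simp add: is_adjoint_def)
  also have "\<dots> = ip x (a y)" by (simp add: sym[of x "a y"])
  finally show ?thesis .
qed
lemma adjR: "is_adjoint ip a ad \<Longrightarrow> ip (a x) y = ip x (ad y)"
  by (simp add: is_adjoint_def)

lemma addL: "ip (y + z) x = ip y x + ip z x"
proof -
  have "ip (y + z) x = cnj (ip x (y + z))" by (rule sym)
  also have "\<dots> = cnj (ip x y) + cnj (ip x z)" by (simp add: addR)
  also have "\<dots> = ip y x + ip z x" by (simp add: sym[of y x] sym[of z x])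
  finally show ?thesis .
qed

lemma realify:
  fixes T S :: "'v \<Rightarrow> 'v" and \<alpha> \<gamma> :: complex
  assumes T: "\<And>x. T x = \<alpha> *\<^sub>C S x + \<gamma> *\<^sub>C x"
    and Ts: "\<And>x z. ip (T x) z = ip x (T z)"
    and Ss: "\<And>x z. ip (S x) z = ip x (S z)"
  shows "\<exists>p q :: real. \<forall>x. T x = complex_of_real p *\<^sub>C S x + complex_of_real q *\<^sub>C x"
proof -
  have w0: "complex_of_real (Im \<alpha>) *\<^sub>C S x + complex_of_real (Im \<gamma>) *\<^sub>C x = 0" for x
  proof -
    let ?w = "complex_of_real (Im \<alpha>) *\<^sub>C S x + complex_of_real (Im \<gamma>) *\<^sub>C x"
    have e: "cnj \<alpha> * ip (S x) z + cnj \<gamma> * ip x z = \<alpha> * ip (S x) z + \<gamma> * ip x z" for z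
      using Ts[of x z] by (simp add: T addR scaleR' scaleL addL Ss)
    have "ip ?w z = 0" for z
    proof -
      have w: "ip ?w z = Im \<alpha> * ip (S x) z + Im \<gamma> * ip x z" by (simp add: addL scaleL)
      have c1: "\<alpha> - cnj \<alpha> = 2 * \<i> * Im \<alpha>" and c2: "\<gamma> - cnj \<gamma> = 2 * \<i> * Im \<gamma>"
        by (simp_all add: complex_eq_iff)
      have d: "(\<alpha> - cnj \<alpha>) * ip (S x) z + (\<gamma> - cnj \<gamma>) * ip x z = 0"
        using e by (simp add: algebra_simps)
      have "2 * \<i> * ip ?w z = (\<alpha> - cnj \<alpha>) * ip (S x) z + (\<gamma> - cnj \<gamma>) * ip x z"
        unfolding w c1 c2 by (simp add: algebra_simps)
      then have "2 * \<i> * ip ?w z = 0" using d by simp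
      then show ?thesis by simp
    qed
    then have "ip ?w ?w = 0" .
    then show ?thesis using ip unfolding is_cinner_def by blast
  qed
  have split: "c *\<^sub>C v = complex_of_real (Re c) *\<^sub>C v + \<i> *\<^sub>C (complex_of_real (Im c) *\<^sub>C v)"
    for c and v :: 'v
  proof -
    have cc: "c = complex_of_real (Re c) + \<i> * complex_of_real (Im c)" by (simp add: complex_eq_iff)
    have "c *\<^sub>C v = (complex_of_real (Re c) + \<i> * complex_of_real (Im c)) *\<^sub>C v"
      by (rule arg_cong[where f="\<lambda>c. c *\<^sub>C v", OF cc])
    also have "\<dots> = complex_of_real (Re c) *\<^sub>C v + \<i> *\<^sub>C (complex_of_real (Im c) *\<^sub>C v)"
      by (simp only: scaleC_add_left scaleC_scaleC)
    finally show ?thesis .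
  qed
  have "T x = complex_of_real (Re \<alpha>) *\<^sub>C S x + complex_of_real (Re \<gamma>) *\<^sub>C x" for x
  proof -
    have "T x = complex_of_real (Re \<alpha>) *\<^sub>C S x + complex_of_real (Re \<gamma>) *\<^sub>C x
        + \<i> *\<^sub>C (complex_of_real (Im \<alpha>) *\<^sub>C S x + complex_of_real (Im \<gamma>) *\<^sub>C x)"
      unfolding T split[of \<alpha>] split[of \<gamma>] scaleC_add_right by (simp add: algebra_simps)
    then show ?thesis using w0[of x] by simp
  qed
  then show ?thesis by blast
qed

end

theorem theorem2:
  fixes ip :: "'v::cvec \<Rightarrow> 'v \<Rightarrow> complex"
    and a ad b bd :: "'v \<Rightarrow> 'v"
    and lam lam' nu nu' :: real and mu mu' :: complex
  assumes "is_cinner ip"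
    and "clin a" and "clin ad" and "clin b" and "clin bd"
    and "is_adjoint ip a ad" and "is_adjoint ip b bd"
    and "\<forall>x. ad x = 0 \<longrightarrow> x = 0"
    and "\<forall>x. b x = 0 \<longrightarrow> x = 0"
    and "lam \<noteq> 0"
    and "opcomm (ad \<circ> a) (ad \<circ> b) = (\<lambda>x. complex_of_real lam *\<^sub>C ad (b x))"
    and "opcomm (b \<circ> bd) (b \<circ> ad) = (\<lambda>x. complex_of_real lam' *\<^sub>C b (ad x))"
    and "opcomm (ad \<circ> b) (bd \<circ> a) = (\<lambda>x. mu *\<^sub>C ad (a x) + complex_of_real nu *\<^sub>C x)"
    and "opcomm (b \<circ> ad) (a \<circ> bd) = (\<lambda>x. mu' *\<^sub>C a (ad x) + complex_of_real nu' *\<^sub>C x)"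
  shows "\<exists>\<alpha> \<beta> \<gamma> \<delta> :: real.
           (\<forall>x. bd (b x) = complex_of_real \<alpha> *\<^sub>C ad (a x) + complex_of_real \<gamma> *\<^sub>C x) \<and>
           (\<forall>x. b (bd x) = complex_of_real \<beta> *\<^sub>C a (ad x) + complex_of_real \<delta> *\<^sub>C x)"
proof -
  interpret ipctx ip by (rule ipctx.intro) (rule assms(1))
  note la = clin_add[OF assms(2)] clin_scale[OF assms(2)] clin_diff[OF assms(2)]
  note lad = clin_add[OF assms(3)] clin_scale[OF assms(3)] clin_diff[OF assms(3)]
  note lb = clin_add[OF assms(4)] clin_scale[OF assms(4)] clin_diff[OF assms(4)]
  note lbd = clin_add[OF assms(5)] clin_scale[OF assms(5)] clin_diff[OF assms(5)]
  note lin = la lad lb lbd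
  have inj_ad: "ad u = ad v \<Longrightarrow> u = v" for u v
    using assms(8) lad(3)[of u v] by (metis right_minus_eq)
  have inj_b: "b u = b v \<Longrightarrow> u = v" for u v
    using assms(9) lb(3)[of u v] by (metis right_minus_eq)
  have H1: "ad (a (ad (b x))) - ad (b (ad (a x))) = complex_of_real lam *\<^sub>C ad (b x)" for x
    using fun_cong[OF assms(11), of x] by (simp add: opcomm_def)
  have H2: "b (bd (b (ad x))) - b (ad (b (bd x))) = complex_of_real lam' *\<^sub>C b (ad x)" for x
    using fun_cong[OF assms(12), of x] by (simp add: opcomm_def)
  have H3: "ad (b (bd (a x))) - bd (a (ad (b x))) = mu *\<^sub>C ad (a x) + complex_of_real nu *\<^sub>C x" for x
    using fun_cong[OF assms(13), of x] by (simp add: opcomm_def)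
  have H4: "b (ad (a (bd x))) - a (bd (b (ad x))) = mu' *\<^sub>C a (ad x) + complex_of_real nu' *\<^sub>C x" for x
    using fun_cong[OF assms(14), of x] by (simp add: opcomm_def)
  have E1: "a (ad (b x)) - b (ad (a x)) = complex_of_real lam *\<^sub>C b x" for x
    by (rule inj_ad) (simp add: lin H1)
  have E2: "bd (b (ad x)) - ad (b (bd x)) = complex_of_real lam' *\<^sub>C ad x" for x
    by (rule inj_b) (simp add: lin H2)
  have E1': "bd (a (ad y)) - ad (a (bd y)) = complex_of_real lam *\<^sub>C bd y" for y
  proof (rule ext)
    fix z
    have "ip z (bd (a (ad y)) - ad (a (bd y))) = ip (a (ad (b z)) - b (ad (a z))) y"
      by (simp add: diffR diffL adjL[OF assms(6)] adjR[OF assms(6)] adjL[OF assms(7)] adjR[OF assms(7)])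
    also have "\<dots> = ip z (complex_of_real lam *\<^sub>C bd y)"
      by (simp add: E1 scaleL scaleR' adjR[OF assms(7)])
    finally show "ip z (bd (a (ad y)) - ad (a (bd y))) = ip z (complex_of_real lam *\<^sub>C bd y)" .
  qed
  have E2': "a (bd (b y)) - b (bd (a y)) = complex_of_real lam' *\<^sub>C a y" for y
  proof (rule ext)
    fix z
    have "ip z (a (bd (b y)) - b (bd (a y))) = ip (bd (b (ad z)) - ad (b (bd z))) y"
      by (simp add: diffR diffL adjL[OF assms(6)] adjR[OF assms(6)] adjL[OF assms(7)] adjR[OF assms(7)])
    also have "\<dots> = ip z (complex_of_real lam' *\<^sub>C a y)"
      by (simp add: E2 scaleL scaleR' adjL[OF assms(6)])
    finally show "ip z (a (bd (b y)) - b (bd (a y))) = ip z (complex_of_real lam' *\<^sub>C a y)" .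
  qed
  have comm1: "bd (b (ad (a y))) = ad (a (bd (b y)))" for y
  proof -
    have "ad (a (bd (b y))) - ad (b (bd (a y))) = complex_of_real lam' *\<^sub>C ad (a y)"
      using arg_cong[OF E2'[of y], of ad] by (simp add: lad)
    then show ?thesis using E2[of "a y"] by (rule same_diff[symmetric])
  qed
  have comm2: "a (ad (b (bd y))) = b (bd (a (ad y)))" for y
  proof -
    have "b (bd (a (ad y))) - b (ad (a (bd y))) = complex_of_real lam *\<^sub>C b (bd y)"
      using arg_cong[OF E1'[of y], of b] by (simp add: lb)
    then show ?thesis using E1[of "bd y"] by (rule same_diff[symmetric])
  qed
  have Y: "bd (b x) = (- (complex_of_real lam' + mu) / complex_of_real lam) *\<^sub>C ad (a x)
      + (- complex_of_real nu / complex_of_real lam) *\<^sub>C x" for x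
  proof (rule solve_lin[OF assms(10)])
    have e1: "complex_of_real lam *\<^sub>C bd (b x) = bd (a (ad (b x))) - bd (b (ad (a x)))"
      using arg_cong[OF E1[of x], of bd] by (simp add: lbd)
    have e2: "bd (a (ad (b x))) = ad (b (bd (a x))) - mu *\<^sub>C ad (a x) - complex_of_real nu *\<^sub>C x"
      using H3[of x] by (simp add: algebra_simps)
    have e3: "ad (b (bd (a x))) = ad (a (bd (b x))) - complex_of_real lam' *\<^sub>C ad (a x)"
      using arg_cong[OF E2'[of x], of ad] by (simp add: lad algebra_simps)
    show "complex_of_real lam *\<^sub>C bd (b x) = - (complex_of_real lam' *\<^sub>C ad (a x)) - mu *\<^sub>C ad (a x) - complex_of_real nu *\<^sub>C x"
      unfolding e1 e2 e3 comm1 by (simp add: algebra_simps)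
  qed
  have W: "b (bd x) = (- (complex_of_real lam' + mu') / complex_of_real lam) *\<^sub>C a (ad x)
      + (- complex_of_real nu' / complex_of_real lam) *\<^sub>C x" for x
  proof (rule solve_lin[OF assms(10)])
    have e1: "complex_of_real lam *\<^sub>C b (bd x) = a (ad (b (bd x))) - b (ad (a (bd x)))"
      using E1[of "bd x"] by simp
    have e2: "b (ad (a (bd x))) = a (bd (b (ad x))) + mu' *\<^sub>C a (ad x) + complex_of_real nu' *\<^sub>C x"
      using H4[of x] by (simp add: algebra_simps)
    have e3: "a (bd (b (ad x))) = b (bd (a (ad x))) + complex_of_real lam' *\<^sub>C a (ad x)"
      using E2'[of "ad x"] by (simp add: algebra_simps)
    show "complex_of_real lam *\<^sub>C b (bd x) = - (complex_of_real lam' *\<^sub>C a (ad x)) - mu' *\<^sub>C a (ad x) - complex_of_real nu' *\<^sub>C x"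
      unfolding e1 e2 e3 comm2 by (simp add: algebra_simps)
  qed
  have sa: "\<And>x z. ip (a (ad x)) z = ip x (a (ad z))" "\<And>x z. ip (ad (a x)) z = ip x (ad (a z))"
    "\<And>x z. ip (b (bd x)) z = ip x (b (bd z))" "\<And>x z. ip (bd (b x)) z = ip x (bd (b z))"
    by (simp_all add: adjL[OF assms(6)] adjR[OF assms(6)] adjL[OF assms(7)] adjR[OF assms(7)])
  obtain p q where pq: "\<forall>x. bd (b x) = complex_of_real p *\<^sub>C ad (a x) + complex_of_real q *\<^sub>C x"
    using realify[of "\<lambda>x. bd (b x)", OF Y sa(4) sa(2)] by blast
  obtain r t where rt: "\<forall>x. b (bd x) = complex_of_real r *\<^sub>C a (ad x) + complex_of_real t *\<^sub>C x"
    using realify[of "\<lambda>x. b (bd x)", OF W sa(3) sa(1)] by blast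
  show ?thesis using pq rt by blast
qed

end
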